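(* Let $0<q<1$ and $c,d,z_1,z_2\in\mathbb C$ with $cz_1\ne q^{-r}$ and $dz_2\ne q^{-r}$ for all integers $r\ge1$. Then the double series below converges absolutely and $$\sum_{m,n=0}^\infty\frac{q^{m^2-mn+n^2}\,h_{m,n}(z_1,z_2|q)}{(q,cz_1q;q)_m\,(q,dz_2q;q)_n}\,c^md^n=\frac{A_q(cd)}{(cz_1q,dz_2q;q)_\infty}.$$
   Context: $(a;q)_n=\prod_{j=0}^{n-1}(1-aq^j)$, $(a;q)_\infty=\prod_{j\ge0}(1-aq^j)$, $(a_1,\dots,a_r;q)_n=\prod_i(a_i;q)_n$, $\left[{m\atop k}\right]_q=\frac{(q;q)_m}{(q;q)_k(q;q)_{m-k}}$, $m\wedge n=\min\{m,n\}$. The second $q$-$2D$-Hermite polynomials are $$h_{m,n}(z_1,z_2|q)=\sum_{j=0}^{m\wedge n}\left[{m\atop j}\right]_q\left[{n\atop j}\right]_q q^{(m-j)(n-j)}(-1)^j(q;q)_j\,z_1^{m-j}z_2^{n-j}.$$ The Ramanujan function is $A_q(z)=\sum_{n=0}^\infty\frac{q^{n^2}}{(q;q)_n}(-z)^n$. *)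

theory Defs
  imports "HOL-Analysis.Analysis"
begin

definition qpoch :: "complex \<Rightarrow> complex \<Rightarrow> nat \<Rightarrow> complex" where
  "qpoch a q n = (\<Prod>j<n. 1 - a * q ^ j)"

definition qpoch_inf :: "complex \<Rightarrow> complex \<Rightarrow> complex" where
  "qpoch_inf a q = lim (\<lambda>n. qpoch a q n)"

definition qbinom :: "complex \<Rightarrow> nat \<Rightarrow> nat \<Rightarrow> complex" where
  "qbinom q m k = qpoch q q m / (qpoch q q k * qpoch q q (m - k))"

definition hermite2 :: "nat \<Rightarrow> nat \<Rightarrow> complex \<Rightarrow> complex \<Rightarrow> complex \<Rightarrow> complex" where
  "hermite2 m n z1 z2 q = (\<Sum>j\<le>min m n.
      qbinom q m j * qbinom q n j * q ^ ((m - j) * (n - j)) * (-1) ^ j * qpoch q q j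
      * z1 ^ (m - j) * z2 ^ (n - j))"

definition ramanujanA :: "complex \<Rightarrow> complex \<Rightarrow> complex" where
  "ramanujanA q z = (\<Sum>n. q ^ (n^2) / qpoch q q n * (-z) ^ n)"

end

theory Submission
  imports Defs
begin

lemma qpoch_0[simp]: "qpoch a q 0 = 1" by (simp add: qpoch_def)
lemma qpoch_Suc: "qpoch a q (Suc n) = qpoch a q n * (1 - a * q ^ n)"
  by (simp add: qpoch_def)

lemma qpoch_add: "qpoch a q (j + n) = qpoch a q j * qpoch (a * q ^ j) q n"
proof (induction n)
  case 0 then show ?case by simp
next
  case (Suc n) then show ?case by (simp add: qpoch_Suc power_add mult_ac)
qed

lemma qpoch_Suc': "qpoch a q (Suc n) = (1 - a) * qpoch (a * q) q n"
  using qpoch_add[of a q 1 n] by (simp add: qpoch_def)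

lemma qpoch_LIMSEQ:
  fixes q :: complex assumes "norm q < 1"
  shows "(\<lambda>n. qpoch a q n) \<longlonglongrightarrow> qpoch_inf a q"
    and "(\<forall>n. qpoch a q n \<noteq> 0) \<Longrightarrow> qpoch_inf a q \<noteq> 0"
proof -
  have s: "summable (\<lambda>i. norm ((1 - a * q ^ i) - 1))"
    using assms by (auto simp: norm_mult norm_power intro!: summable_mult summable_geometric)
  have cp: "convergent_prod (\<lambda>i. 1 - a * q ^ i)"
    by (rule abs_convergent_prod_imp_convergent_prod[OF summable_imp_abs_convergent_prod[OF s]])
  have "(\<lambda>n. qpoch a q (Suc n)) \<longlonglongrightarrow> prodinf (\<lambda>i. 1 - a * q ^ i)"
    using convergent_prod_LIMSEQ[OF cp] by (simp add: qpoch_def lessThan_Suc_atMost)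
  hence L: "(\<lambda>n. qpoch a q n) \<longlonglongrightarrow> prodinf (\<lambda>i. 1 - a * q ^ i)"
    by (simp add: filterlim_sequentially_Suc)
  hence "qpoch_inf a q = prodinf (\<lambda>i. 1 - a * q ^ i)"
    unfolding qpoch_inf_def by (simp add: limI)
  with L show "(\<lambda>n. qpoch a q n) \<longlonglongrightarrow> qpoch_inf a q" by simp
  assume nz: "\<forall>n. qpoch a q n \<noteq> 0"
  have "\<And>i. 1 - a * q ^ i \<noteq> 0"
  proof -
    fix i show "1 - a * q ^ i \<noteq> 0" using nz[rule_format, of "Suc i"] by (simp add: qpoch_Suc)
  qed
  from prodinf_nonzero[OF cp this] \<open>qpoch_inf a q = _\<close> show "qpoch_inf a q \<noteq> 0" by simp
qed

lemma qpoch_inf_split: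
  fixes q :: complex assumes "norm q < 1"
  shows "qpoch_inf a q = qpoch a q j * qpoch_inf (a * q ^ j) q"
proof -
  have "(\<lambda>n. qpoch a q (n + j)) \<longlonglongrightarrow> qpoch_inf a q"
    using qpoch_LIMSEQ(1)[OF assms, of a] by (rule LIMSEQ_ignore_initial_segment)
  moreover have "(\<lambda>n. qpoch a q (n + j)) \<longlonglongrightarrow> qpoch a q j * qpoch_inf (a * q ^ j) q"
    unfolding add.commute[of _ j] qpoch_add
    by (intro tendsto_mult tendsto_const qpoch_LIMSEQ(1)[OF assms])
  ultimately show ?thesis by (rule LIMSEQ_unique)
qed

lemma qpoch_qq_nz:
  fixes q :: complex assumes "norm q < 1"
  shows "qpoch q q n \<noteq> 0"
proof -
  have "1 - q * q ^ j \<noteq> 0" for j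
  proof
    assume "1 - q * q ^ j = 0"
    hence "q ^ Suc j = 1" by simp
    hence "norm (q ^ Suc j) = 1" by simp
    moreover have "norm (q ^ Suc j) < 1" unfolding norm_power using assms
      by (subst power_less_one_iff) auto
    ultimately show False by simp
  qed
  thus ?thesis by (simp add: qpoch_def)
qed

lemma qpoch_bounds:
  fixes q :: complex assumes "norm q < 1" and nz: "\<forall>n. qpoch a q n \<noteq> 0"
  shows "\<exists>M>0. \<forall>n. norm (qpoch a q n) \<le> M" "\<exists>M>0. \<forall>n. norm (1 / qpoch a q n) \<le> M"
proof -
  have L: "(\<lambda>n. qpoch a q n) \<longlonglongrightarrow> qpoch_inf a q" using qpoch_LIMSEQ(1)[OF assms(1)] .
  have "Bseq (\<lambda>n. qpoch a q n)" using L by (rule convergent_imp_Bseq[OF convergentI])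
  thus "\<exists>M>0. \<forall>n. norm (qpoch a q n) \<le> M" by (simp add: Bseq_def)
  have "(\<lambda>n. 1 / qpoch a q n) \<longlonglongrightarrow> 1 / qpoch_inf a q"
    using qpoch_LIMSEQ(2)[OF assms] L by (intro tendsto_divide tendsto_const) auto
  hence "Bseq (\<lambda>n. 1 / qpoch a q n)" by (rule convergent_imp_Bseq[OF convergentI])
  thus "\<exists>M>0. \<forall>n. norm (1 / qpoch a q n) \<le> M" by (simp add: Bseq_def)
qed

definition gb :: "complex \<Rightarrow> nat \<Rightarrow> nat \<Rightarrow> complex" where
  "gb q N k = (if k \<le> N then qbinom q N k else 0)"

lemma qpoch_qq_factor_nz:
  fixes q :: complex assumes "norm q < 1" shows "1 - q * q ^ n \<noteq> 0"
  using qpoch_qq_nz[OF assms, of "Suc n"] by (simp add: qpoch_Suc)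

lemma gb_0: fixes q :: complex assumes "norm q < 1" shows "gb q N 0 = 1"
  using qpoch_qq_nz[OF assms] by (simp add: gb_def qbinom_def)

lemma alg_pascal:
  fixes P A B q x y :: complex
  assumes "A \<noteq> 0" "B \<noteq> 0" "1 - q*x \<noteq> 0" "1 - q*y \<noteq> 0"
  shows "P * (1 - q * (q * x * y)) / (A * (1 - q * x) * (B * (1 - q * y))) =
         q * x * (P / (A * (1 - q * x) * B)) + P / (A * (B * (1 - q * y)))"
proof -
  have "P * (1 - q * (q * x * y)) = q * x * P * (1 - q * y) + P * (1 - q * x)"
    by (simp add: algebra_simps)
  thus ?thesis using assms by (simp add: divide_simps)
qed

lemma gb_Suc_Suc:
  fixes q :: complex assumes q: "norm q < 1"
  shows "gb q (Suc N) (Suc k) = q ^ Suc k * gb q N (Suc k) + gb q N k"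
proof (cases "k < N")
  case True
  then obtain r where N: "N = Suc k + r" using less_imp_Suc_add[OF True] by auto
  have "gb q (Suc N) (Suc k) = qpoch q q (Suc (Suc k + r)) / (qpoch q q (Suc k) * qpoch q q (Suc r))"
    unfolding N gb_def qbinom_def by simp
  also have "\<dots> = qpoch q q (Suc k + r) * (1 - q * (q * q^k * q^r)) /
      (qpoch q q k * (1 - q * q^k) * (qpoch q q r * (1 - q * q^r)))"
    unfolding qpoch_Suc[of q q "Suc k + r"] qpoch_Suc[of q q k] qpoch_Suc[of q q r]
    by (simp add: power_add)
  also have "\<dots> = q * q^k * (qpoch q q (Suc k + r) / (qpoch q q k * (1 - q * q^k) * qpoch q q r))
      + qpoch q q (Suc k + r) / (qpoch q q k * (qpoch q q r * (1 - q * q^r)))"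
    by (rule alg_pascal) (use qpoch_qq_nz[OF q] qpoch_qq_factor_nz[OF q] in auto)
  also have "\<dots> = q ^ Suc k * gb q N (Suc k) + gb q N k"
  proof -
    have a: "gb q N (Suc k) = qpoch q q (Suc k + r) / (qpoch q q (Suc k) * qpoch q q r)"
      unfolding N gb_def qbinom_def by simp
    have b: "gb q N k = qpoch q q (Suc k + r) / (qpoch q q k * qpoch q q (Suc r))"
      unfolding N gb_def qbinom_def by simp
    show ?thesis unfolding a b qpoch_Suc[of q q k] qpoch_Suc[of q q r] by (simp add: mult_ac)
  qed
  finally show ?thesis .
next
  case False
  show ?thesis
  proof (cases "k = N")
    case True
    then show ?thesis using qpoch_qq_nz[OF q] by (simp add: gb_def qbinom_def)
  next
    case False
    with \<open>\<not> k < N\<close> show ?thesis by (simp add: gb_def)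
  qed
qed
lemma alg_sk:
  fixes X Y w z a :: complex
  assumes "X \<noteq> 0" "Y \<noteq> 0" "Y = 1 - w * z"
  shows "a / (X * Y) = a / X + a * w * z / (X * Y)"
proof -
  have "a * Y + a * w * z = a * (Y + w * z)" by (simp add: algebra_simps)
  also have "Y + w * z = 1" using assms(3) by simp
  finally have "a = a * Y + a * w * z" by simp
  hence "a / (X * Y) = (a * Y + a * w * z) / (X * Y)" by simp
  also have "\<dots> = a / X + a * w * z / (X * Y)" using assms(1,2) by (simp add: add_divide_distrib)
  finally show ?thesis .
qed

lemma finite_identity:
  fixes q w :: complex assumes q: "norm q < 1" and nz: "\<forall>k. qpoch w q k \<noteq> 0"
  shows "(\<Sum>k\<le>N. w ^ k * q ^ (k * (k - 1)) * gb q N k / qpoch w q k) = 1 / qpoch w q N"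
  using nz
proof (induction N arbitrary: w)
  case 0
  then show ?case using gb_0[OF q] by simp
next
  case (Suc N w)
  have nz: "qpoch w q k \<noteq> 0" for k using Suc.prems by auto
  have w1: "1 - w \<noteq> 0" using nz[of 1] by (simp add: qpoch_def)
  have nzq: "\<forall>k. qpoch (w * q) q k \<noteq> 0"
    using nz qpoch_Suc' by (metis mult_zero_right)
  note IH = Suc.IH[OF nzq]
  define t where "t k = w ^ k * q ^ (k * (k - 1)) / qpoch w q k" for k
  define u where "u k = q ^ k * t k * gb q N k" for k
  have sk: "w ^ k * q ^ (k * k) / qpoch w q (Suc k) = q ^ k * t k + t (Suc k)" for k
  proof -
    have e: "k + k * (k - 1) = k * k" by (cases k) auto
    have "q ^ k * t k = w ^ k * q ^ (k * k) / qpoch w q k"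
      unfolding t_def e[symmetric] power_add by simp
    moreover have "t (Suc k) = w ^ Suc k * q ^ (k * k) * q ^ k / qpoch w q (Suc k)"
      unfolding t_def by (simp add: power_add mult_ac)
    moreover have "qpoch w q (Suc k) = qpoch w q k * (1 - w * q ^ k)" by (rule qpoch_Suc)
    ultimately show ?thesis using nz[of k] nz[of "Suc k"] alg_sk[of "qpoch w q k" "1 - w * q^k" w "q^k" "w ^ k * q ^ (k * k)"]
      by (simp add: mult_ac)
  qed
  have "1 / qpoch w q (Suc N) = 1 / (1 - w) * (1 / qpoch (w * q) q N)"
    by (simp add: qpoch_Suc')
  also have "\<dots> = (\<Sum>k\<le>N. w ^ k * q ^ (k * k) / qpoch w q (Suc k) * gb q N k)"
  proof -
    have "(w * q) ^ k * q ^ (k * (k - 1)) = w ^ k * q ^ (k * k)" for k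
    proof -
      have e: "k + k * (k - 1) = k * k" by (cases k) auto
      show ?thesis unfolding e[symmetric] power_add power_mult_distrib by (simp add: mult_ac)
    qed
    thus ?thesis unfolding IH[symmetric] sum_distrib_left
      by (intro sum.cong refl) (simp add: qpoch_Suc')
  qed
  also have "\<dots> = (\<Sum>k\<le>N. u k) + (\<Sum>k\<le>N. t (Suc k) * gb q N k)"
    unfolding sk u_def by (simp add: sum.distrib algebra_simps)
  also have "(\<Sum>k\<le>N. u k) = (\<Sum>k\<le>Suc N. u k)"
    by (simp add: u_def gb_def)
  also have "\<dots> = u 0 + (\<Sum>k\<le>N. u (Suc k))"
    by (rule sum.atMost_Suc_shift)
  also have "u 0 = 1" using gb_0[OF q] by (simp add: u_def t_def)
  also have "1 + (\<Sum>k\<le>N. u (Suc k)) + (\<Sum>k\<le>N. t (Suc k) * gb q N k)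
      = t 0 * gb q (Suc N) 0 + (\<Sum>k\<le>N. t (Suc k) * gb q (Suc N) (Suc k))"
  proof -
    have "t 0 = 1" by (simp add: t_def)
    thus ?thesis using gb_0[OF q]
      by (simp add: u_def gb_Suc_Suc[OF q] distrib_left sum.distrib mult_ac)
  qed
  also have "\<dots> = (\<Sum>k\<le>Suc N. t k * gb q (Suc N) k)"
    by (rule sum.atMost_Suc_shift[symmetric])
  finally show ?case by (simp add: t_def mult_ac)
qed

lemma summable_gauss:
  fixes R r :: real assumes "0 \<le> r" "r < 1" "0 \<le> R"
  shows "summable (\<lambda>k. R ^ k * r ^ (k * (k - 1)))"
proof -
  have "(\<lambda>n. R * (r^2) ^ n) \<longlonglongrightarrow> R * 0"
    using assms by (intro tendsto_mult tendsto_const LIMSEQ_power_zero)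
      (simp add: abs_square_less_1)
  hence "eventually (\<lambda>n. R * (r^2) ^ n < 1/2) sequentially"
    by (intro order_tendstoD) auto
  then obtain N where N: "\<And>n. n \<ge> N \<Longrightarrow> R * (r^2) ^ n < 1/2"
    by (auto simp: eventually_sequentially)
  show ?thesis
  proof (rule summable_ratio_test[of "1/2" N])
    fix n assume "n \<ge> N"
    have e: "Suc n * (Suc n - 1) = n * (n - 1) + 2 * n" by (cases n) (auto simp: algebra_simps)
    have "R ^ Suc n * r ^ (Suc n * (Suc n - 1)) = (R * (r^2) ^ n) * (R ^ n * r ^ (n * (n - 1)))"
      unfolding e power_add power_mult by (simp add: mult_ac)
    also have "\<dots> \<le> 1/2 * (R ^ n * r ^ (n * (n - 1)))"
      using N[OF \<open>n \<ge> N\<close>] assms by (intro mult_right_mono) auto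
    finally show "norm (R ^ Suc n * r ^ (Suc n * (Suc n - 1))) \<le> 1/2 * norm (R ^ n * r ^ (n * (n - 1)))"
      using assms by simp
  qed simp
qed

lemma gb_limit:
  fixes q :: complex assumes q: "norm q < 1"
  shows "(\<lambda>N. gb q N k) \<longlonglongrightarrow> 1 / qpoch q q k"
proof -
  have L: "(\<lambda>N. qpoch q q N) \<longlonglongrightarrow> qpoch_inf q q" by (rule qpoch_LIMSEQ(1)[OF q])
  have nz: "qpoch_inf q q \<noteq> 0" using qpoch_LIMSEQ(2)[OF q] qpoch_qq_nz[OF q] by auto
  have L2: "(\<lambda>N. qpoch q q (N - k)) \<longlonglongrightarrow> qpoch_inf q q"
    by (rule filterlim_compose[OF L filterlim_minus_const_nat_at_top])
  have "(\<lambda>N. qpoch q q N / (qpoch q q k * qpoch q q (N - k))) \<longlonglongrightarrow>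
        qpoch_inf q q / (qpoch q q k * qpoch_inf q q)"
    using nz qpoch_qq_nz[OF q] by (intro tendsto_divide tendsto_mult tendsto_const L L2) auto
  also have "qpoch_inf q q / (qpoch q q k * qpoch_inf q q) = 1 / qpoch q q k" using nz by simp
  finally show ?thesis
  proof (rule Lim_transform_eventually)
    show "eventually (\<lambda>N. qpoch q q N / (qpoch q q k * qpoch q q (N - k)) = gb q N k) sequentially"
      using eventually_ge_at_top[of k] by eventually_elim (simp add: gb_def qbinom_def)
  qed
qed

lemma gb_bound:
  fixes q :: complex assumes q: "norm q < 1"
  obtains G where "G > 0" "\<And>N k. norm (gb q N k) \<le> G"
proof -
  have nzq: "\<forall>n. qpoch q q n \<noteq> 0" using qpoch_qq_nz[OF q] by auto
  obtain B where B: "B > 0" "\<And>n. norm (qpoch q q n) \<le> B" using qpoch_bounds(1)[OF q nzq] by auto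
  obtain C where C: "C > 0" "\<And>n. norm (1 / qpoch q q n) \<le> C" using qpoch_bounds(2)[OF q nzq] by auto
  have "norm (gb q N k) \<le> B * C * C" for N k
  proof (cases "k \<le> N")
    case True
    have "gb q N k = qpoch q q N * (1 / qpoch q q k) * (1 / qpoch q q (N - k))"
      using True by (simp add: gb_def qbinom_def)
    hence "norm (gb q N k) = norm (qpoch q q N) * norm (1 / qpoch q q k) * norm (1 / qpoch q q (N - k))"
      by (simp only: norm_mult)
    also have "\<dots> \<le> B * C * C"
      using B C by (intro mult_mono) auto
    finally show ?thesis .
  next
    case False thus ?thesis using B C by (simp add: gb_def)
  qed
  thus ?thesis using that[of "B * C * C"] B C by auto
qed

lemma inf_identity:
  fixes q w :: complex assumes q: "norm q < 1" and nz: "\<forall>k. qpoch w q k \<noteq> 0"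
  shows "((\<lambda>k. w ^ k * q ^ (k * (k - 1)) / (qpoch q q k * qpoch w q k)) has_sum (1 / qpoch_inf w q)) UNIV"
proof -
  define a where "a k N = w ^ k * q ^ (k * (k - 1)) * gb q N k / qpoch w q k" for k N
  define b where "b k = w ^ k * q ^ (k * (k - 1)) / (qpoch q q k * qpoch w q k)" for k
  obtain G where G: "G > 0" "\<And>N k. norm (gb q N k) \<le> G" using gb_bound[OF q] by blast
  obtain C where C: "C > 0" "\<And>n. norm (1 / qpoch w q n) \<le> C" using qpoch_bounds(2)[OF q nz] by auto
  define M where "M k = (norm w) ^ k * (norm q) ^ (k * (k - 1)) * (G * C)" for k
  have lim: "(\<lambda>N. a k N) \<longlonglongrightarrow> b k" for k
  proof -
    have "(\<lambda>N. w ^ k * q ^ (k * (k - 1)) * gb q N k / qpoch w q k) \<longlonglongrightarrow>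
          w ^ k * q ^ (k * (k - 1)) * (1 / qpoch q q k) / qpoch w q k"
      by (intro tendsto_intros gb_limit[OF q]) (use nz in auto)
    thus ?thesis by (simp add: a_def b_def)
  qed
  have bd: "norm (a k N) \<le> M k" for k N
  proof -
    have "norm (a k N) = norm w ^ k * norm q ^ (k * (k - 1)) * (norm (gb q N k) * norm (1 / qpoch w q k))"
      by (simp add: a_def norm_mult norm_divide norm_power)
    also have "\<dots> \<le> norm w ^ k * norm q ^ (k * (k - 1)) * (G * C)"
      using G C by (intro mult_left_mono mult_mono) auto
    finally show ?thesis by (simp add: M_def)
  qed
  have sM: "summable M" unfolding M_def
    by (intro summable_mult2 summable_gauss) (use q in auto)
  have T: "summable (\<lambda>n. norm (b n)) \<and> (\<lambda>N. suminf (\<lambda>k. a k N)) \<longlonglongrightarrow> suminf b"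
  proof -
    have ev: "eventually (\<lambda>(k,n). norm (a k n) \<le> M k) (sequentially \<times>\<^sub>F sequentially)"
      by (intro always_eventually) (auto simp: bd)
    show ?thesis using tannerys_theorem[OF lim ev sM] by auto
  qed
  have "suminf (\<lambda>k. a k N) = (\<Sum>k\<le>N. a k N)" for N
    by (rule suminf_finite) (auto simp: a_def gb_def)
  also have "(\<Sum>k\<le>N. a k N) = 1 / qpoch w q N" for N
    unfolding a_def by (rule finite_identity[OF q nz])
  finally have "(\<lambda>N. suminf (\<lambda>k. a k N)) \<longlonglongrightarrow> 1 / qpoch_inf w q"
    using qpoch_LIMSEQ[OF q, of w] nz by (auto intro!: tendsto_divide tendsto_const)
  with T have "suminf b = 1 / qpoch_inf w q" using LIMSEQ_unique by blast
  moreover have "b sums suminf b" using T summable_norm_cancel summable_sums by blast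
  ultimately have "(b has_sum (1 / qpoch_inf w q)) UNIV"
    using T norm_summable_imp_has_sum by metis
  thus ?thesis unfolding b_def .
qed

lemma F_sum:
  fixes Q x :: complex assumes q: "norm Q < 1" and nz: "\<forall>k. qpoch (x * Q) Q k \<noteq> 0"
  shows "((\<lambda>a. x ^ a * Q ^ (a^2 + j * a) / (qpoch Q Q a * qpoch (x * Q) Q (j + a)))
          has_sum (1 / qpoch_inf (x * Q) Q)) UNIV"
proof -
  define X where "X = x * Q"
  define w where "w = X * Q ^ j"
  have nzX: "qpoch X Q k \<noteq> 0" for k using nz X_def by auto
  have nzw: "\<forall>k. qpoch w Q k \<noteq> 0"
    using nzX qpoch_add[of X Q j] w_def by (metis mult_eq_0_iff)
  have H: "((\<lambda>a. 1 / qpoch X Q j * (w ^ a * Q ^ (a * (a - 1)) / (qpoch Q Q a * qpoch w Q a)))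
           has_sum (1 / qpoch X Q j * (1 / qpoch_inf w Q))) UNIV"
    by (rule has_sum_cmult_right[OF inf_identity[OF q nzw]])
  have v: "1 / qpoch X Q j * (1 / qpoch_inf w Q) = 1 / qpoch_inf X Q"
    using qpoch_inf_split[OF q, of X j] w_def by simp
  have t: "1 / qpoch X Q j * (w ^ a * Q ^ (a * (a - 1)) / (qpoch Q Q a * qpoch w Q a))
         = x ^ a * Q ^ (a^2 + j * a) / (qpoch Q Q a * qpoch X Q (j + a))" for a
  proof -
    have e: "a + j * a + a * (a - 1) = a^2 + j * a" by (cases a) (auto simp: power2_eq_square)
    have "w ^ a * Q ^ (a * (a - 1)) = x ^ a * Q ^ (a^2 + j * a)"
      unfolding w_def X_def e[symmetric] power_add power_mult_distrib power_mult
      by (simp add: mult_ac power_mult[symmetric] mult.commute[of j])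
    moreover have "qpoch X Q (j + a) = qpoch X Q j * qpoch w Q a"
      unfolding w_def by (rule qpoch_add)
    ultimately show ?thesis by simp
  qed
  have "((\<lambda>a. x ^ a * Q ^ (a^2 + j * a) / (qpoch Q Q a * qpoch X Q (j + a)))
          has_sum (1 / qpoch_inf X Q)) UNIV" using H unfolding v t .
  thus ?thesis by (simp add: X_def)
qed

lemma has_sum_prod2:
  fixes f :: "'i \<Rightarrow> 'a::{real_normed_field, banach}" and g :: "'j \<Rightarrow> 'a"
  assumes f: "(f has_sum F) UNIV" and g: "(g has_sum G) UNIV"
    and nf: "(\<lambda>a. norm (f a)) summable_on UNIV" and ng: "(\<lambda>b. norm (g b)) summable_on UNIV"
  shows "((\<lambda>(a,b). f a * g b) has_sum (F * G)) UNIV"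
    and "(\<lambda>(a,b). norm (f a * g b)) summable_on UNIV"
proof -
  have ns: "(\<lambda>(a,b). norm (f a) * norm (g b)) summable_on Sigma UNIV (\<lambda>_. UNIV)"
  proof (rule summable_on_SigmaI)
    fix a :: 'i
    show "((\<lambda>b. (\<lambda>(a,b). norm (f a) * norm (g b)) (a, b)) has_sum (norm (f a) * infsum (\<lambda>b. norm (g b)) UNIV)) UNIV"
      using has_sum_cmult_right[OF has_sum_infsum[OF ng]] by simp
  next
    show "(\<lambda>a. norm (f a) * infsum (\<lambda>b. norm (g b)) UNIV) summable_on UNIV"
      using summable_on_cmult_left[OF nf] by simp
  qed auto
  hence ns': "(\<lambda>(a,b). norm (f a * g b)) summable_on UNIV"
    by (simp add: norm_mult case_prod_beta)
  thus "(\<lambda>(a,b). norm (f a * g b)) summable_on UNIV" .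
  have s: "(\<lambda>(a,b). f a * g b) summable_on Sigma UNIV (\<lambda>_. UNIV)"
  proof -
    have "(\<lambda>p. f (fst p) * g (snd p)) summable_on UNIV"
    proof (rule abs_summable_summable)
      have eq: "(\<lambda>(a,b). norm (f a * g b)) = (\<lambda>x. norm (f (fst x) * g (snd x)))"
        by (auto simp: fun_eq_iff)
      show "(\<lambda>x. norm (f (fst x) * g (snd x))) summable_on UNIV" using ns' unfolding eq .
    qed
    moreover have "(\<lambda>(a,b). f a * g b) = (\<lambda>p. f (fst p) * g (snd p))"
      by (auto simp: fun_eq_iff)
    ultimately show ?thesis by simp
  qed
  show "((\<lambda>(a,b). f a * g b) has_sum (F * G)) UNIV"
    using has_sum_SigmaI[where f = "\<lambda>(a,b). f a * g b" and g = "\<lambda>a. f a * G" and A = UNIV and B = "\<lambda>_. UNIV",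
        OF _ _ s] has_sum_cmult_right[OF g] has_sum_cmult_left[OF f]
    by simp
qed

lemma alg_main:
  fixes eab ej ea eb Pja Pjb Pj Pa Pb XX YY s z1a z2b cj ca dj db :: complex
  assumes "Pja \<noteq> 0" "Pjb \<noteq> 0" "Pj \<noteq> 0" "Pa \<noteq> 0" "Pb \<noteq> 0" "XX \<noteq> 0" "YY \<noteq> 0" "eab \<noteq> 0"
  shows "(ej * ea * eb / eab) * (Pja/(Pj*Pa) * (Pjb/(Pj*Pb)) * eab * s * Pj * z1a * z2b) / (Pja * XX * Pjb * YY) * (cj*ca) * (dj*db)
       = (ej/Pj * (s*(cj*dj))) * ((ca*z1a) * ea / (Pa*XX) * ((db*z2b) * eb / (Pb*YY)))"
  using assms by (simp add: field_simps)

lemma nat_exp: "(j+a)^2 + (j+b)^2 - (j+a)*(j+b) = j^2 + (a^2 + j*a) + (b^2 + j*b) - a*(b::nat)"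
proof -
  have "(j+a)^2 + (j+b)^2 + a*b = (j+a)*(j+b) + (j^2 + (a^2 + j*a) + (b^2 + j*b))"
    by (simp add: power2_eq_square algebra_simps)
  thus ?thesis by linarith
qed

lemma term_eq:
  fixes Q c d z1 z2 :: complex
  assumes q: "norm Q < 1" "Q \<noteq> 0"
    and nzX: "\<forall>k. qpoch (c*z1*Q) Q k \<noteq> 0" and nzY: "\<forall>k. qpoch (d*z2*Q) Q k \<noteq> 0"
  shows "Q ^ ((j+a)^2 + (j+b)^2 - (j+a)*(j+b)) *
      (qbinom Q (j+a) j * qbinom Q (j+b) j * Q^((j+a-j)*(j+b-j)) * (-1)^j * qpoch Q Q j
        * z1^(j+a-j) * z2^(j+b-j))
      / (qpoch Q Q (j+a) * qpoch (c*z1*Q) Q (j+a) * qpoch Q Q (j+b) * qpoch (d*z2*Q) Q (j+b))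
      * c^(j+a) * d^(j+b)
    = (Q^(j^2) / qpoch Q Q j * (-(c*d))^j) *
      ((c*z1)^a * Q^(a^2+j*a) / (qpoch Q Q a * qpoch (c*z1*Q) Q (j+a)) *
       ((d*z2)^b * Q^(b^2+j*b) / (qpoch Q Q b * qpoch (d*z2*Q) Q (j+b))))"
proof -
  have e1: "Q ^ ((j+a)^2 + (j+b)^2 - (j+a)*(j+b)) = Q^(j^2) * Q^(a^2+j*a) * Q^(b^2+j*b) / Q^(a*b)"
  proof -
    have le: "a*b \<le> j^2 + (a^2 + j*a) + (b^2 + j*b)"
    proof -
      have "a * b \<le> a * a + (b * b::nat)"
      proof (cases "a \<le> b")
        case True then have "a * b \<le> b * b" by (rule mult_le_mono1) 
        then show ?thesis by linarith
      next
        case False then have "a * b \<le> a * a" by (intro mult_le_mono2) auto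
        then show ?thesis by linarith
      qed
      hence "a*b \<le> a^2 + b^2" by (simp add: power2_eq_square)
      thus ?thesis by linarith
    qed
    have "Q^(j^2) * Q^(a^2+j*a) * Q^(b^2+j*b) = Q ^ (j^2 + (a^2 + j*a) + (b^2 + j*b) - a*b) * Q^(a*b)"
      unfolding power_add[symmetric] using le by simp
    thus ?thesis unfolding nat_exp using q(2) by simp
  qed
  have b1: "qbinom Q (j+a) j = qpoch Q Q (j+a) / (qpoch Q Q j * qpoch Q Q a)"
    by (simp add: qbinom_def)
  have b2: "qbinom Q (j+b) j = qpoch Q Q (j+b) / (qpoch Q Q j * qpoch Q Q b)"
    by (simp add: qbinom_def)
  have m: "(-(c*d))^j = (-1)^j * (c^j * d^j)"
    by (simp add: power_minus[of "c*d"] power_mult_distrib)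
  have s1: "j + a - j = a" and s2: "j + b - j = b" by auto
  show ?thesis
    unfolding s1 s2 e1 b1 b2 m power_add[of c j a] power_add[of d j b]
      power_mult_distrib[of c z1 a] power_mult_distrib[of d z2 b]
    by (rule alg_main) (use q qpoch_qq_nz[OF q(1)] nzX nzY in auto)
qed

lemma diag_reindex:
  fixes W :: "nat \<times> nat \<times> nat \<Rightarrow> 'a::{banach,uniform_topological_group_add}"
  assumes W: "(W has_sum t) UNIV"
  shows "((\<lambda>(m,n). \<Sum>j\<le>min m n. W (j, m-j, n-j)) has_sum t) UNIV"
proof -
  define V where "V = (\<lambda>((m::nat,n::nat),j::nat). W (j, m-j, n-j))"
  define SS where "SS = Sigma (UNIV :: (nat \<times> nat) set) (\<lambda>(m,n). {..min m n})"
  have "(W has_sum t) UNIV = (V has_sum t) SS"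
  proof (rule has_sum_reindex_bij_witness[where i = "\<lambda>((m,n),j). (j,m-j,n-j)" and j = "\<lambda>(j,a,b). ((j+a,j+b),j)"])
    fix x :: "nat \<times> nat \<times> nat" assume "x \<in> UNIV"
    obtain j a b where x: "x = (j,a,b)" by (cases x) auto
    show "(\<lambda>((m,n),j). (j,m-j,n-j)) ((\<lambda>(j,a,b). ((j+a,j+b),j)) x) = x" by (simp add: x)
    show "(\<lambda>(j,a,b). ((j+a,j+b),j)) x \<in> SS" by (simp add: x SS_def)
    show "V ((\<lambda>(j,a,b). ((j+a,j+b),j)) x) = W x" by (simp add: x V_def)
  next
    fix y :: "(nat \<times> nat) \<times> nat" assume "y \<in> SS"
    then obtain m n j where y: "y = ((m,n),j)" "j \<le> m" "j \<le> n" by (auto simp: SS_def)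
    show "(\<lambda>(j,a,b). ((j+a,j+b),j)) ((\<lambda>((m,n),j). (j,m-j,n-j)) y) = y" using y by simp
    show "(\<lambda>((m,n),j). (j,m-j,n-j)) y \<in> UNIV" by simp
  qed simp
  with W have VS: "(V has_sum t) SS" by simp
  have "((\<lambda>x. \<Sum>j\<in>(\<lambda>(m,n). {..min m n}) x. V (x, j)) has_sum t) UNIV"
    by (rule has_sum_Sigma'[OF VS[unfolded SS_def]]) auto
  moreover have "(\<lambda>x. \<Sum>j\<in>(\<lambda>(m,n). {..min m n}) x. V (x, j)) = (\<lambda>(m,n). \<Sum>j\<le>min m n. W (j, m-j, n-j))"
    by (auto simp: fun_eq_iff V_def)
  ultimately show ?thesis by simp
qed

lemma nz_from_hyp:
  fixes Q x :: complex
  assumes "Q \<noteq> 0" "\<forall>r::nat. r \<ge> 1 \<longrightarrow> x \<noteq> 1 / Q ^ r"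
  shows "\<forall>k. qpoch (x * Q) Q k \<noteq> 0"
proof
  fix k
  have "1 - x * Q * Q ^ j \<noteq> 0" for j
  proof
    assume "1 - x * Q * Q ^ j = 0"
    hence "x * Q ^ Suc j = 1" by (simp add: mult_ac)
    hence "x = 1 / Q ^ Suc j" using assms(1) by (simp add: field_simps)
    with assms(2) show False by auto
  qed
  thus "qpoch (x * Q) Q k \<noteq> 0" by (simp add: qpoch_def)
qed

lemma pow_le_gauss:
  fixes r :: real assumes "0 \<le> r" "r \<le> 1" "k * (k - 1) \<le> e"
  shows "r ^ e \<le> r ^ (k * (k - 1))"
  using assms by (intro power_decreasing) auto

lemma gauss_exp_le: "a * (a - 1) \<le> a^2 + j * (a::nat)"
proof -
  have "a * (a - 1) \<le> a * a" by (rule mult_le_mono2) simp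
  thus ?thesis unfolding power2_eq_square by linarith
qed

lemma gauss_exp2: "j * (j - 1) \<le> (j::nat)^2"
  using gauss_exp_le[of j 0] by simp

lemma nonneg_has_sum_summable:
  fixes f :: "nat \<Rightarrow> real" assumes "summable f" "\<And>n. f n \<ge> 0"
  shows "f summable_on UNIV" "(\<lambda>n. norm (f n)) summable_on UNIV"
proof -
  show "f summable_on UNIV" using assms summable_nonneg_imp_summable_on_strong by auto
  thus "(\<lambda>n. norm (f n)) summable_on UNIV" using summable_on_iff_abs_summable_on_real by blast
qed

theorem corollary7p2:
  fixes q :: real and c d z1 z2 :: complex
  assumes "0 < q" "q < 1"
    and "\<forall>r::nat. r \<ge> 1 \<longrightarrow> c * z1 \<noteq> 1 / (complex_of_real q) ^ r"
    and "\<forall>r::nat. r \<ge> 1 \<longrightarrow> d * z2 \<noteq> 1 / (complex_of_real q) ^ r"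
  defines "Q \<equiv> complex_of_real q"
  defines "T \<equiv> (\<lambda>(m, n). Q ^ (m^2 + n^2 - m * n) * hermite2 m n z1 z2 Q
                 / (qpoch Q Q m * qpoch (c * z1 * Q) Q m * qpoch Q Q n * qpoch (d * z2 * Q) Q n)
                 * c ^ m * d ^ n)"
  shows "(\<lambda>mn. norm (T mn)) summable_on (UNIV :: (nat \<times> nat) set) \<and>
         (T has_sum (ramanujanA Q (c * d) / (qpoch_inf (c * z1 * Q) Q * qpoch_inf (d * z2 * Q) Q)))
           (UNIV :: (nat \<times> nat) set)"
proof -
  have nQ: "norm Q = q" using assms(1) by (simp add: Q_def)
  have q1: "norm Q < 1" using nQ assms(2) by simp
  have Q0: "Q \<noteq> 0" using assms(1) by (simp add: Q_def)
  have nzX: "\<forall>k. qpoch (c * z1 * Q) Q k \<noteq> 0"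
    by (rule nz_from_hyp[OF Q0]) (use assms(3) in \<open>simp add: Q_def\<close>)
  have nzY: "\<forall>k. qpoch (d * z2 * Q) Q k \<noteq> 0"
    by (rule nz_from_hyp[OF Q0]) (use assms(4) in \<open>simp add: Q_def\<close>)
  have nzQ: "\<forall>n. qpoch Q Q n \<noteq> 0" using qpoch_qq_nz[OF q1] by auto
  obtain Cq where Cq: "Cq > 0" "\<And>n. norm (1 / qpoch Q Q n) \<le> Cq" using qpoch_bounds(2)[OF q1 nzQ] by auto
  obtain CX where CX: "CX > 0" "\<And>n. norm (1 / qpoch (c * z1 * Q) Q n) \<le> CX" using qpoch_bounds(2)[OF q1 nzX] by auto
  obtain CY where CY: "CY > 0" "\<And>n. norm (1 / qpoch (d * z2 * Q) Q n) \<le> CY" using qpoch_bounds(2)[OF q1 nzY] by auto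

  define A where "A j = Q ^ (j^2) / qpoch Q Q j * (-(c * d)) ^ j" for j
  define Fx where "Fx j a = (c * z1) ^ a * Q ^ (a^2 + j * a) / (qpoch Q Q a * qpoch (c * z1 * Q) Q (j + a))" for j a
  define Fy where "Fy j b = (d * z2) ^ b * Q ^ (b^2 + j * b) / (qpoch Q Q b * qpoch (d * z2 * Q) Q (j + b))" for j b
  define U where "U = (\<lambda>(j, a, b). A j * (Fx j a * Fy j b))"
  define K where "K = 1 / qpoch_inf (c * z1 * Q) Q * (1 / qpoch_inf (d * z2 * Q) Q)"
  define GA where "GA j = norm (c * d) ^ j * q ^ (j * (j - 1)) * Cq" for j
  define GX where "GX a = norm (c * z1) ^ a * q ^ (a * (a - 1)) * (Cq * CX)" for a
  define GY where "GY b = norm (d * z2) ^ b * q ^ (b * (b - 1)) * (Cq * CY)" for b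

  have sGA: "summable GA" unfolding GA_def
    by (intro summable_mult2 summable_gauss) (use assms in auto)
  have sGX: "summable GX" unfolding GX_def
    by (intro summable_mult2 summable_gauss) (use assms in auto)
  have sGY: "summable GY" unfolding GY_def
    by (intro summable_mult2 summable_gauss) (use assms in auto)
  have GA0: "GA j \<ge> 0" for j using Cq assms(1) by (simp add: GA_def)
  have GX0: "GX j \<ge> 0" for j using Cq CX assms(1) by (simp add: GX_def)
  have GY0: "GY j \<ge> 0" for j using Cq CY assms(1) by (simp add: GY_def)

  have bA: "norm (A j) \<le> GA j" for j
  proof -
    have "norm (A j) = norm (c * d) ^ j * q ^ (j^2) * norm (1 / qpoch Q Q j)"
      by (simp add: A_def norm_mult norm_divide norm_power nQ)
    also have "\<dots> \<le> norm (c * d) ^ j * q ^ (j * (j - 1)) * Cq"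
      using Cq assms(1,2) by (intro mult_mono mult_left_mono pow_le_gauss) (use gauss_exp_le gauss_exp2 in auto)
    finally show ?thesis by (simp add: GA_def)
  qed
  have bX: "norm (Fx j a) \<le> GX a" for j a
  proof -
    have "norm (Fx j a) = norm (c * z1) ^ a * q ^ (a^2 + j * a) * (norm (1 / qpoch Q Q a) * norm (1 / qpoch (c * z1 * Q) Q (j + a)))"
      by (simp add: Fx_def norm_mult norm_divide norm_power nQ)
    also have "\<dots> \<le> norm (c * z1) ^ a * q ^ (a * (a - 1)) * (Cq * CX)"
      using Cq CX assms(1,2) by (intro mult_mono mult_left_mono pow_le_gauss) (use gauss_exp_le gauss_exp2 in auto)
    finally show ?thesis by (simp add: GX_def)
  qed
  have bY: "norm (Fy j b) \<le> GY b" for j b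
  proof -
    have "norm (Fy j b) = norm (d * z2) ^ b * q ^ (b^2 + j * b) * (norm (1 / qpoch Q Q b) * norm (1 / qpoch (d * z2 * Q) Q (j + b)))"
      by (simp add: Fy_def norm_mult norm_divide norm_power nQ)
    also have "\<dots> \<le> norm (d * z2) ^ b * q ^ (b * (b - 1)) * (Cq * CY)"
      using Cq CY assms(1,2) by (intro mult_mono mult_left_mono pow_le_gauss) (use gauss_exp_le gauss_exp2 in auto)
    finally show ?thesis by (simp add: GY_def)
  qed

  note GAs = nonneg_has_sum_summable[OF sGA GA0]
  note GXs = nonneg_has_sum_summable[OF sGX GX0]
  note GYs = nonneg_has_sum_summable[OF sGY GY0]
  define GXY where "GXY = (\<lambda>(a, b). GX a * GY b)"
  have GXYh: "(GXY has_sum (infsum GX UNIV * infsum GY UNIV)) UNIV"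
    and GXYn: "(\<lambda>(a,b). norm (GX a * GY b)) summable_on UNIV"
    using has_sum_prod2[OF has_sum_infsum[OF GXs(1)] has_sum_infsum[OF GYs(1)] GXs(2) GYs(2)]
    by (simp_all add: GXY_def)
  have GXYn': "(\<lambda>p. norm (GXY p)) summable_on UNIV"
  proof -
    have "(\<lambda>(a,b). norm (GX a * GY b)) = (\<lambda>p. norm (GXY p))" by (auto simp: GXY_def fun_eq_iff)
    with GXYn show ?thesis by simp
  qed
  have G3: "((\<lambda>(j, ab). GA j * GXY ab) has_sum (infsum GA UNIV * (infsum GX UNIV * infsum GY UNIV))) UNIV"
    using has_sum_prod2(1)[OF has_sum_infsum[OF GAs(1)] GXYh GAs(2) GXYn'] .
  have nU: "(\<lambda>p. norm (U p)) summable_on UNIV"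
  proof (rule Infinite_Sum.abs_summable_on_comparison_test')
    show "(\<lambda>(j, ab). GA j * GXY ab) summable_on UNIV" using G3 by (rule has_sum_imp_summable)
  next
    fix p :: "nat \<times> nat \<times> nat"
    obtain j a b where p: "p = (j, a, b)" by (cases p) auto
    have "norm (U p) = norm (A j) * (norm (Fx j a) * norm (Fy j b))" by (simp add: p U_def norm_mult)
    also have "\<dots> \<le> GA j * (GX a * GY b)"
      using bA bX bY GA0 GX0 GY0 by (intro mult_mono) auto
    finally show "norm (U p) \<le> (\<lambda>(j, ab). GA j * GXY ab) p" by (simp add: p GXY_def)
  qed
  have Us: "U summable_on UNIV" using abs_summable_summable nU by blast
  define s where "s = infsum U UNIV"
  have Uh: "(U has_sum s) UNIV" using Us by (simp add: s_def)

  have inner: "((\<lambda>ab. U (j, ab)) has_sum (A j * K)) UNIV" for j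
  proof -
    have hx: "(Fx j has_sum (1 / qpoch_inf (c * z1 * Q) Q)) UNIV"
      unfolding Fx_def by (rule F_sum[OF q1 nzX])
    have hy: "(Fy j has_sum (1 / qpoch_inf (d * z2 * Q) Q)) UNIV"
      unfolding Fy_def by (rule F_sum[OF q1 nzY])
    have nx: "(\<lambda>a. norm (Fx j a)) summable_on UNIV"
      by (rule Infinite_Sum.abs_summable_on_comparison_test'[OF GXs(1)]) (use bX in auto)
    have ny: "(\<lambda>a. norm (Fy j a)) summable_on UNIV"
      by (rule Infinite_Sum.abs_summable_on_comparison_test'[OF GYs(1)]) (use bY in auto)
    have "((\<lambda>(a,b). Fx j a * Fy j b) has_sum K) UNIV"
      using has_sum_prod2(1)[OF hx hy nx ny] by (simp add: K_def)
    from has_sum_cmult_right[OF this, of "A j"]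
    have "((\<lambda>ab. A j * (case ab of (a,b) \<Rightarrow> Fx j a * Fy j b)) has_sum (A j * K)) UNIV" .
    moreover have "(\<lambda>ab. A j * (case ab of (a,b) \<Rightarrow> Fx j a * Fy j b)) = (\<lambda>ab. U (j, ab))"
      by (auto simp: U_def fun_eq_iff)
    ultimately show ?thesis by simp
  qed
  have outer: "((\<lambda>j. A j * K) has_sum s) UNIV"
    by (rule has_sum_Sigma'[where f=U and a=s and A=UNIV and B="\<lambda>_. UNIV"]) (use Uh inner in auto)
  have Ah: "(A has_sum ramanujanA Q (c * d)) UNIV"
  proof -
    have sA: "summable (\<lambda>n. norm (A n))"
      by (rule summable_comparison_test[OF _ sGA]) (use bA in auto)
    have "A sums suminf A" using sA summable_norm_cancel summable_sums by blast
    moreover have "ramanujanA Q (c * d) = suminf A"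
      unfolding ramanujanA_def A_def by (simp add: mult_ac)
    ultimately show ?thesis using norm_summable_imp_has_sum[OF sA] by simp
  qed
  have "((\<lambda>j. A j * K) has_sum (ramanujanA Q (c * d) * K)) UNIV"
    by (rule has_sum_cmult_left[OF Ah])
  with outer have sval: "s = ramanujanA Q (c * d) * K" using has_sum_unique by blast

  have Tdiag: "T (m, n) = (\<Sum>j\<le>min m n. U (j, m - j, n - j))" for m n
  proof -
    have "T (m, n) = (\<Sum>j\<le>min m n. Q ^ (m^2 + n^2 - m * n) *
        (qbinom Q m j * qbinom Q n j * Q ^ ((m - j) * (n - j)) * (-1) ^ j * qpoch Q Q j
         * z1 ^ (m - j) * z2 ^ (n - j))
        / (qpoch Q Q m * qpoch (c * z1 * Q) Q m * qpoch Q Q n * qpoch (d * z2 * Q) Q n)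
        * c ^ m * d ^ n)"
      unfolding T_def hermite2_def
      by (simp add: sum_distrib_left sum_distrib_right sum_divide_distrib)
    also have "\<dots> = (\<Sum>j\<le>min m n. U (j, m - j, n - j))"
    proof (rule sum.cong[OF refl])
      fix j assume "j \<in> {..min m n}"
      then obtain a b where m: "m = j + a" and n: "n = j + b"
        by (metis atMost_iff le_Suc_ex min.bounded_iff)
      show "Q ^ (m^2 + n^2 - m * n) *
        (qbinom Q m j * qbinom Q n j * Q ^ ((m - j) * (n - j)) * (-1) ^ j * qpoch Q Q j
         * z1 ^ (m - j) * z2 ^ (n - j))
        / (qpoch Q Q m * qpoch (c * z1 * Q) Q m * qpoch Q Q n * qpoch (d * z2 * Q) Q n)
        * c ^ m * d ^ n = U (j, m - j, n - j)"
        unfolding m n using term_eq[OF q1 Q0 nzX nzY, of j a b]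
        by (simp add: U_def A_def Fx_def Fy_def)
    qed
    finally show ?thesis .
  qed
  have Th: "(T has_sum s) UNIV"
  proof -
    have "((\<lambda>(m,n). \<Sum>j\<le>min m n. U (j, m-j, n-j)) has_sum s) UNIV" by (rule diag_reindex[OF Uh])
    moreover have "(\<lambda>(m,n). \<Sum>j\<le>min m n. U (j, m-j, n-j)) = T"
      by (auto simp: fun_eq_iff Tdiag)
    ultimately show ?thesis by simp
  qed
  have Tn: "(\<lambda>mn. norm (T mn)) summable_on UNIV"
  proof (rule Infinite_Sum.abs_summable_on_comparison_test')
    have "((\<lambda>(m,n). \<Sum>j\<le>min m n. norm (U (j, m-j, n-j))) has_sum infsum (\<lambda>p. norm (U p)) UNIV) UNIV"
      using diag_reindex[OF has_sum_infsum[OF nU]] by simp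
    thus "(\<lambda>(m,n). \<Sum>j\<le>min m n. norm (U (j, m-j, n-j))) summable_on UNIV"
      by (rule has_sum_imp_summable)
  next
    fix mn :: "nat \<times> nat"
    obtain m n where mn: "mn = (m, n)" by (cases mn) auto
    show "norm (T mn) \<le> (\<lambda>(m,n). \<Sum>j\<le>min m n. norm (U (j, m-j, n-j))) mn"
      unfolding mn Tdiag by (simp add: norm_sum)
  qed
  have "ramanujanA Q (c * d) / (qpoch_inf (c * z1 * Q) Q * qpoch_inf (d * z2 * Q) Q) = s"
    by (simp add: sval K_def)
  with Th Tn show ?thesis by simp
qed

end
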